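(* Let $n\ge2$, $A\in\mathbb{R}^{n\times m}$, $B\in\mathbb{R}^{m\times n}$, and let $C$ be a cycle in the DSR$^{[2]}$ graph $G^{[2]}_{A,B}$. Then $C$ is direct if it has an even number of inversions, and twisted otherwise.
   Context: DSR graphs: for $A\in\mathbb{R}^{n\times m}$, $B\in\mathbb{R}^{m\times n}$, $G_{A,B}$ is the signed bipartite digraph with S-vertices $S_1,\dots,S_n$ and R-vertices $R_1,\dots,R_m$, an arc $R_j\to S_i$ of sign $\mathrm{sign}(A_{ij})$ iff $A_{ij}\ne0$, an arc $S_i\to R_j$ of sign $\mathrm{sign}(B_{ji})$ iff $B_{ji}\ne0$, with antiparallel arcs of equal sign merged into an undirected edge. Walks traverse edges consistently with orientation; a cycle is a nonempty closed walk with no repeated vertex except first$=$last. DSR$^{[2]}$ graph: $\overline{\mathbf L}^A\in\mathbb{R}^{\binom n2\times mn}$ has rows indexed by $(i,j)$, $i<j$, columns by $(k,l)$, $1\le k\le m$, $1\le l\le n$, with entries $A_{jk}$ if $l=i$, $-A_{ik}$ if $l=j$, $0$ otherwise; $\underline{\mathbf L}^B\in\mathbb{R}^{mn\times\binom n2}$ has $(k,l),(i,j)$ entry $B_{kj}$ if $l=i$, $-B_{ki}$ if $l=j$, $0$ otherwise. $G^{[2]}_{A,B}:=G_{\overline{\mathbf L}^A,\underline{\mathbf L}^B}$, with S-vertices written $ij=ji$ and R-vertices $k^l$; an edge $(ij,k^l)$ exists only if $l\in\{i,j\}$. The projection $\pi$ sends an edge $(ij,k^j)$ of $G^{[2]}_{A,B}$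 to the edge $(S_i,R_k)$ of $G_{A,B}$. Direct/twisted: let $C$ be a cycle of $G^{[2]}_{A,B}$ with S-vertex sequence $a_1b_1,a_2b_2,\dots,a_{T+1}b_{T+1}=a_1b_1$, and write the segment of $C$ from $a_rb_r$ to $a_{r+1}b_{r+1}$ as $(a_rb_r,k^l,a_{r+1}b_{r+1})$ with $l$ the common index; its projection is a length-2 walk in $G_{A,B}$ from $S_x$ to $S_y$, where $x$ is the element of $\{a_r,b_r\}$ other than $l$ and $y$ the element of $\{a_{r+1},b_{r+1}\}$ other than $l$. Starting from the two empty walks at $S_{a_1}$ and $S_{b_1}$, for $r=1,\dots,T$ append this projected segment to whichever of the two current walks ends at $S_x$ (the two current walks always end at the two distinct vertices $S_{a_r},S_{b_r}$). The resulting walks $W',W''$ are either both closed, in which case $C$ is called direct, or one goes from $S_{a_1}$ to $S_{b_1}$ and the other back, in which case $C$ is called twisted. Inversions: two consecutive S-vertices of $C$ (including the last and first) are distinct and share exactly one index; writing them as $ij$ and $ij'$ with common index $i$, the pair is an inversion if $(i-j)(i-j')<0$. *)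

theory Defs
  imports Complex_Main
begin

datatype ('s, 'r) dsr_vertex = SV (sidx: 's) | RV (ridx: 'r)

(* Arcs of the DSR graph G_{A,B} with S-index set SS and R-index set RR:
   R_c -> S_s iff A s c ~= 0,  S_s -> R_c iff B c s ~= 0.
   Signs are irrelevant for traversability; an undirected (merged) edge
   can be traversed in both directions, which is exactly the union of the
   two arc relations below. *)
definition dsr_arc ::
  "'s set \<Rightarrow> 'r set \<Rightarrow> ('s \<Rightarrow> 'r \<Rightarrow> real) \<Rightarrow> ('r \<Rightarrow> 's \<Rightarrow> real)
   \<Rightarrow> ('s, 'r) dsr_vertex \<Rightarrow> ('s, 'r) dsr_vertex \<Rightarrow> bool" where
  "dsr_arc SS RR A B u v \<longleftrightarrow>
     (\<exists>s\<in>SS. \<exists>c\<in>RR. (u = RV c \<and> v = SV s \<and> A s c \<noteq> 0)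
                    \<or> (u = SV s \<and> v = RV c \<and> B c s \<noteq> 0))"

definition is_walk :: "('v \<Rightarrow> 'v \<Rightarrow> bool) \<Rightarrow> 'v list \<Rightarrow> bool" where
  "is_walk E w \<longleftrightarrow> w \<noteq> [] \<and> (\<forall>t. Suc t < length w \<longrightarrow> E (w ! t) (w ! Suc t))"

definition is_cycle :: "('v \<Rightarrow> 'v \<Rightarrow> bool) \<Rightarrow> 'v list \<Rightarrow> bool" where
  "is_cycle E w \<longleftrightarrow> is_walk E w \<and> length w \<ge> 2 \<and> hd w = last w \<and> distinct (butlast w)"

(* The DSR^[2] matrices; A is n x m (entries A i k, 1<=i<=n, 1<=k<=m),
   B is m x n (entries B k i).  Rows/columns of L^A: S-index (i,j) with i<j,
   R-index (k,l) with 1<=k<=m, 1<=l<=n. *)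
definition LA :: "(nat \<Rightarrow> nat \<Rightarrow> real) \<Rightarrow> nat \<times> nat \<Rightarrow> nat \<times> nat \<Rightarrow> real" where
  "LA A ij kl = (case ij of (i, j) \<Rightarrow> case kl of (k, l) \<Rightarrow>
      if l = i then A j k else if l = j then - A i k else 0)"

definition LB :: "(nat \<Rightarrow> nat \<Rightarrow> real) \<Rightarrow> nat \<times> nat \<Rightarrow> nat \<times> nat \<Rightarrow> real" where
  "LB B kl ij = (case kl of (k, l) \<Rightarrow> case ij of (i, j) \<Rightarrow>
      if l = i then B k j else if l = j then - B k i else 0)"

definition S2 :: "nat \<Rightarrow> (nat \<times> nat) set" where
  "S2 n = {(i, j). 1 \<le> i \<and> i < j \<and> j \<le> n}"

definition R2 :: "nat \<Rightarrow> nat \<Rightarrow> (nat \<times> nat) set" where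
  "R2 n m = {1..m} \<times> {1..n}"

definition dsr_graph :: "nat \<Rightarrow> nat \<Rightarrow> (nat \<Rightarrow> nat \<Rightarrow> real) \<Rightarrow> (nat \<Rightarrow> nat \<Rightarrow> real)
   \<Rightarrow> (nat, nat) dsr_vertex \<Rightarrow> (nat, nat) dsr_vertex \<Rightarrow> bool" where
  "dsr_graph n m A B = dsr_arc {1..n} {1..m} A B"

(* Arc relation of G^[2]_{A,B} := G_{L^A, L^B}; S-vertex ij (i<j) is SV (i,j),
   R-vertex k^l is RV (k,l) *)
definition dsr2_graph :: "nat \<Rightarrow> nat \<Rightarrow> (nat \<Rightarrow> nat \<Rightarrow> real) \<Rightarrow> (nat \<Rightarrow> nat \<Rightarrow> real)
   \<Rightarrow> (nat \<times> nat, nat \<times> nat) dsr_vertex \<Rightarrow> (nat \<times> nat, nat \<times> nat) dsr_vertex \<Rightarrow> bool" where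
  "dsr2_graph n m A B = dsr_arc (S2 n) (R2 n m) (LA A) (LB B)"

(* For a closed walk w starting at an S-vertex, of length 2T+1:
   S-vertices a_r b_r = w!(2r), R-vertices k^l = w!(2r+1). *)
definition num_segs :: "('s, 'r) dsr_vertex list \<Rightarrow> nat" where
  "num_segs w = (length w - 1) div 2"

definition svert :: "(nat \<times> nat, nat \<times> nat) dsr_vertex list \<Rightarrow> nat \<Rightarrow> nat \<times> nat" where
  "svert w r = sidx (w ! (2 * r))"

definition rvert :: "(nat \<times> nat, nat \<times> nat) dsr_vertex list \<Rightarrow> nat \<Rightarrow> nat \<times> nat" where
  "rvert w r = ridx (w ! (2 * r + 1))"

definition other :: "nat \<times> nat \<Rightarrow> nat \<Rightarrow> nat" where
  "other p l = (if l = fst p then snd p else fst p)"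

definition add_seg ::
  "(nat, nat) dsr_vertex list \<times> (nat, nat) dsr_vertex list \<Rightarrow> nat \<Rightarrow> nat \<Rightarrow> nat
   \<Rightarrow> (nat, nat) dsr_vertex list \<times> (nat, nat) dsr_vertex list" where
  "add_seg W x k y = (case W of (W1, W2) \<Rightarrow>
      if last W1 = SV x then (W1 @ [RV k, SV y], W2)
      else if last W2 = SV x then (W1, W2 @ [RV k, SV y])
      else (W1, W2))"

definition proj_walks :: "(nat \<times> nat, nat \<times> nat) dsr_vertex list
   \<Rightarrow> (nat, nat) dsr_vertex list \<times> (nat, nat) dsr_vertex list" where
  "proj_walks w =
     foldl (\<lambda>W r. let l = snd (rvert w r); k = fst (rvert w r) in
                 add_seg W (other (svert w r) l) k (other (svert w (Suc r)) l))
       ([SV (fst (svert w 0))], [SV (snd (svert w 0))]) [0..<num_segs w]"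

definition is_direct :: "(nat \<times> nat, nat \<times> nat) dsr_vertex list \<Rightarrow> bool" where
  "is_direct w = (case proj_walks w of (W1, W2) \<Rightarrow> hd W1 = last W1 \<and> hd W2 = last W2)"

definition is_twisted :: "(nat \<times> nat, nat \<times> nat) dsr_vertex list \<Rightarrow> bool" where
  "is_twisted w = (case proj_walks w of (W1, W2) \<Rightarrow>
      hd W1 = SV (fst (svert w 0)) \<and> last W1 = SV (snd (svert w 0)) \<and>
      hd W2 = SV (snd (svert w 0)) \<and> last W2 = SV (fst (svert w 0)))"

definition is_inversion :: "nat \<times> nat \<Rightarrow> nat \<times> nat \<Rightarrow> bool" where
  "is_inversion p q \<longleftrightarrow> p \<noteq> q \<and>
     (\<exists>i j j'. {i, j} = {fst p, snd p} \<and> {i, j'} = {fst q, snd q} \<and>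
              (int i - int j) * (int i - int j') < 0)"

definition num_inversions :: "(nat \<times> nat, nat \<times> nat) dsr_vertex list \<Rightarrow> nat" where
  "num_inversions w = card {r. r < num_segs w \<and> is_inversion (svert w r) (svert w (Suc r))}"

end

theory Submission imports Defs begin

lemma inv_iff:
  fixes a b a' b' l :: nat
  assumes "a<b" "a'<b'" "l = a \<or> l = b" "l = a' \<or> l = b'"
  shows "is_inversion (a,b) (a',b') \<longleftrightarrow> (a,b) \<noteq> (a',b') \<and> ((l < other (a,b) l) \<noteq> (l < other (a',b') l))"
proof
  assume h: "is_inversion (a,b) (a',b')"
  then obtain i j j' where e: "{i,j} = {a,b}" "{i,j'} = {a',b'}" "(int i - int j) * (int i - int j') < 0"
    and ne: "(a,b) \<noteq> (a',b')" unfolding is_inversion_def by auto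
  show "(a,b) \<noteq> (a',b') \<and> ((l < other (a,b) l) \<noteq> (l < other (a',b') l))"
    using assms e ne unfolding other_def doubleton_eq_iff
    by (auto simp: mult_less_0_iff)
next
  assume h: "(a,b) \<noteq> (a',b') \<and> ((l < other (a,b) l) \<noteq> (l < other (a',b') l))"
  show "is_inversion (a,b) (a',b')"
    unfolding is_inversion_def
    apply (rule conjI, use h in simp)
    apply (rule exI[of _ l], rule exI[of _ "other (a,b) l"], rule exI[of _ "other (a',b') l"])
    using assms h unfolding other_def by (auto simp: mult_less_0_iff)
qed

lemma step:
  fixes a b a' b' l k :: nat
  assumes "a<b" "a'<b'" "l = a \<or> l = b" "l = a' \<or> l = b'"
    "last W1 = SV (if s then a else b)" "last W2 = SV (if s then b else a)"
    "W1 \<noteq> []" "W2 \<noteq> []" "hd W1 = h1" "hd W2 = h2"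
  shows "case add_seg (W1,W2) (other (a,b) l) k (other (a',b') l) of (V1,V2) \<Rightarrow>
     V1 \<noteq> [] \<and> V2 \<noteq> [] \<and> hd V1 = h1 \<and> hd V2 = h2 \<and>
     (let s' = (s = (\<not> is_inversion (a,b) (a',b'))) in
       last V1 = SV (if s' then a' else b') \<and> last V2 = SV (if s' then b' else a'))"
  using assms unfolding inv_iff[OF assms(1-4)] add_seg_def other_def
  by (auto simp: Let_def)


lemma arc_cases:
  "dsr_arc SS RR A B u v \<Longrightarrow>
   (\<exists>s c. u = SV s \<and> v = RV c \<and> s\<in>SS \<and> c\<in>RR \<and> B c s \<noteq> 0) \<or>
   (\<exists>s c. u = RV c \<and> v = SV s \<and> s\<in>SS \<and> c\<in>RR \<and> A s c \<noteq> 0)"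
  unfolding dsr_arc_def by auto

lemma alt:
  assumes "is_walk (dsr_arc SS RR A B) w" "\<exists>p. hd w = SV p"
  shows "t < length w \<Longrightarrow> (even t \<longleftrightarrow> (\<exists>s. w!t = SV s))"
proof (induction t)
  case 0
  then show ?case using assms(2) by (simp add: hd_conv_nth)
next
  case (Suc t)
  have "dsr_arc SS RR A B (w!t) (w!Suc t)" using assms(1) Suc.prems unfolding is_walk_def by auto
  from arc_cases[OF this] Suc show ?case by auto
qed

lemma card_Suc_count:
  "card {r. r < Suc t \<and> P r} = card {r. r < t \<and> P r} + (if P t then 1 else 0)"
proof -
  have "{r. r < Suc t \<and> P r} = {r. r < t \<and> P r} \<union> (if P t then {t} else {})"
    by (auto simp: less_Suc_eq)
  then show ?thesis by (auto simp: card_insert_if)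
qed

lemma fold_inv:
  assumes S: "\<And>r. r \<le> T \<Longrightarrow> fst (svert w r) < snd (svert w r)"
    and L: "\<And>r. r < T \<Longrightarrow> (snd (rvert w r) = fst (svert w r) \<or> snd (rvert w r) = snd (svert w r))
        \<and> (snd (rvert w r) = fst (svert w (Suc r)) \<or> snd (rvert w r) = snd (svert w (Suc r)))"
    and t: "t \<le> T"
  shows "case foldl (\<lambda>W r. let l = snd (rvert w r); k = fst (rvert w r) in
                 add_seg W (other (svert w r) l) k (other (svert w (Suc r)) l))
       ([SV (fst (svert w 0))], [SV (snd (svert w 0))]) [0..<t] of (W1, W2) \<Rightarrow>
     W1 \<noteq> [] \<and> W2 \<noteq> [] \<and> hd W1 = SV (fst (svert w 0)) \<and> hd W2 = SV (snd (svert w 0)) \<and>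
     (let s = even (card {r. r < t \<and> is_inversion (svert w r) (svert w (Suc r))}) in
       last W1 = SV (if s then fst (svert w t) else snd (svert w t)) \<and>
       last W2 = SV (if s then snd (svert w t) else fst (svert w t)))"
  using t
proof (induction t)
  case 0
  then show ?case by simp
next
  case (Suc t)
  define F where "F = (\<lambda>W r. let l = snd (rvert w r); k = fst (rvert w r) in
                 add_seg W (other (svert w r) l) k (other (svert w (Suc r)) l))"
  define I :: "(nat, nat) dsr_vertex list \<times> (nat, nat) dsr_vertex list" where "I = ([SV (fst (svert w 0))], [SV (snd (svert w 0))])"
  obtain W1 W2 where WW: "foldl F I [0..<t] = (W1, W2)" by fastforce
  define s where "s = even (card {r. r < t \<and> is_inversion (svert w r) (svert w (Suc r))})"
  obtain a b where ab: "svert w t = (a,b)" by fastforce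
  obtain a' b' where ab': "svert w (Suc t) = (a',b')" by fastforce
  obtain k l where kl: "rvert w t = (k,l)" by fastforce
  have IH: "W1 \<noteq> [] \<and> W2 \<noteq> [] \<and> hd W1 = SV (fst (svert w 0)) \<and> hd W2 = SV (snd (svert w 0)) \<and>
       last W1 = SV (if s then a else b) \<and> last W2 = SV (if s then b else a)"
    using Suc WW ab unfolding F_def I_def s_def by (simp add: Let_def)
  have h1: "a < b" using S[of t] Suc.prems ab by simp
  have h2: "a' < b'" using S[of "Suc t"] Suc.prems ab' by simp
  have h3: "l = a \<or> l = b" "l = a' \<or> l = b'" using L[of t] Suc.prems ab ab' kl by auto
  have st: "foldl F I [0..<Suc t] = add_seg (W1,W2) (other (a,b) l) k (other (a',b') l)"
    using WW ab ab' kl by (simp add: F_def Let_def)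
  have cnt: "even (card {r. r < Suc t \<and> is_inversion (svert w r) (svert w (Suc r))}) =
      (s = (\<not> is_inversion (a,b) (a',b')))"
    unfolding card_Suc_count s_def using ab ab' by auto
  show ?case
    using step[OF h1 h2 h3 _ _ _ _ refl refl, of W1 s W2 k] IH st cnt ab'
    unfolding F_def[symmetric] I_def[symmetric]
    by (auto simp: Let_def split: prod.splits)
qed

theorem proposition5p2:
  fixes n m :: nat and A B :: "nat \<Rightarrow> nat \<Rightarrow> real"
    and C :: "(nat \<times> nat, nat \<times> nat) dsr_vertex list"
  assumes "n \<ge> 2"
    and "is_cycle (dsr2_graph n m A B) C"
    and "\<exists>p. hd C = SV p"
  shows "(even (num_inversions C) \<longrightarrow> is_direct C) \<and> (odd (num_inversions C) \<longrightarrow> is_twisted C)"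
proof -
  let ?E = "dsr_arc (S2 n) (R2 n m) (LA A) (LB B)"
  have cyc: "is_walk ?E C" "length C \<ge> 2" "hd C = last C"
    using assms(2) unfolding is_cycle_def dsr2_graph_def by auto
  have ne: "C \<noteq> []" using cyc(2) by auto
  note par = alt[OF cyc(1) assms(3)]
  define T where "T = num_segs C"
  have lastn: "last C = C ! (length C - 1)" using ne by (simp add: last_conv_nth)
  have "even (length C - 1)" using par[of "length C - 1"] assms(3) cyc(3) lastn ne by auto
  then have len: "length C = 2*T+1" unfolding T_def num_segs_def using cyc(2) by auto
  have T1: "T \<ge> 1" using len cyc(2) by auto
  have sv: "C!(2*r) = SV (svert C r)" if "r \<le> T" for r
  proof -
    have "\<exists>s. C!(2*r) = SV s" using par[of "2*r"] that len by auto
    then show ?thesis unfolding svert_def by auto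
  qed
  have rv: "C!(2*r+1) = RV (rvert C r)" if "r < T" for r
  proof -
    have "\<not> (\<exists>s. C!(2*r+1) = SV s)" using par[of "2*r+1"] that len by auto
    then show ?thesis unfolding rvert_def by (cases "C!(2*r+1)") auto
  qed
  have a1: "svert C r \<in> S2 n \<and> LB B (rvert C r) (svert C r) \<noteq> 0" if "r < T" for r
  proof -
    have "?E (C!(2*r)) (C!Suc (2*r))" using cyc(1) len that unfolding is_walk_def by auto
    then show ?thesis using sv[of r] rv[of r] that unfolding dsr_arc_def by auto
  qed
  have a2: "svert C (Suc r) \<in> S2 n \<and> LA A (svert C (Suc r)) (rvert C r) \<noteq> 0" if "r < T" for r
  proof -
    have "?E (C!(2*r+1)) (C!Suc (2*r+1))" using cyc(1) len that unfolding is_walk_def by auto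
    moreover have "Suc (2*r+1) = 2 * Suc r" by simp
    ultimately show ?thesis using sv[of "Suc r"] rv[of r] that unfolding dsr_arc_def by auto
  qed
  have sT: "svert C T = svert C 0"
    using sv[of T] sv[of 0] cyc(3) lastn len ne by (simp add: hd_conv_nth)
  have S: "fst (svert C r) < snd (svert C r)" if "r \<le> T" for r
  proof (cases "r < T")
    case True then show ?thesis using a1[of r] unfolding S2_def by auto
  next
    case False then have "r = T" using that by auto
    then show ?thesis using a1[of 0] T1 sT unfolding S2_def by auto
  qed
  have L: "(snd (rvert C r) = fst (svert C r) \<or> snd (rvert C r) = snd (svert C r))
        \<and> (snd (rvert C r) = fst (svert C (Suc r)) \<or> snd (rvert C r) = snd (svert C (Suc r)))"
    if "r < T" for r
    using a1[OF that] a2[OF that] unfolding LA_def LB_def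
    by (auto split: prod.splits if_splits)
  note FI = fold_inv[of T C, OF S L order_refl]
  show ?thesis
    using FI sT unfolding is_direct_def is_twisted_def proj_walks_def num_inversions_def T_def[symmetric]
    by (auto simp: Let_def split: prod.splits)
qed

end
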